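(* There is an absolute constant $C>0$ such that the following holds. Let $n,N,m,\sigma\in\mathbb{N}$ and $\delta\in(0,1)$, and let $\vec{F}\in\mathbb{C}^{n\times n}$ be the unitary discrete Fourier matrix. For each $i\in[N]$, let $\vec{B}_i\in\mathbb{C}^{m\times n}$ be formed by sampling $m$ rows of $\vec{F}$ uniformly and independently at random, multiplying each sampled row by an independent uniformly random sign, and rescaling the rows by $m^{-1/2}$; the matrices $\vec{B}_1,\dots,\vec{B}_N$ are mutually independent. If $$m\ge C\,\sigma\,\delta^{-2}\log(n)^4\log(N),$$ then with probability at least $1-n^{-\log(n)^3}$ the collection $(\vec{B}_i)_{i\in[N]}$ is pairwise $(\delta,\sigma)$-incoherent.
   Context: $[N]=\{1,\dots,N\}$; $\langle\cdot,\cdot\rangle$ and $\|\cdot\|$ denote the Euclidean inner product and norm, and $|\vec{v}|_0$ the number of nonzero entries of $\vec{v}$. A collection of matrices $\vec{B}_i\in\mathbb{K}^{m\times n_i}$, $i\in[N]$, is pairwise $(\delta,\sigma)$-incoherent (with $\sigma=(\sigma_1,\dots,\sigma_N)$, or a single number $\sigma$ meaning $\sigma_i=\sigma$ for all $i$) if for all $i\ne j$, $$\sup\{|\langle\vec{B}_i\vec{v}_i,\vec{B}_j\vec{v}_j\rangle| : |\vec{v}_i|_0\le\sigma_i,\ |\vec{v}_j|_0\le\sigma_j,\ \|\vec{v}_i\|=\|\vec{v}_j\|=1\}\le\delta.$$ *)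

theory Defs
  imports "HOL-Analysis.Analysis" "HOL-Probability.Product_PMF"
begin

text \<open>Matrices are functions nat => nat => complex with explicit dimensions;
  rows and columns are indexed from 0.  Vectors in K^d are functions nat => complex
  supported on {0..<d}.\<close>

definition vec_space :: "nat \<Rightarrow> (nat \<Rightarrow> complex) set" where
  "vec_space d = {v. \<forall>j. j \<ge> d \<longrightarrow> v j = 0}"

definition l0 :: "nat \<Rightarrow> (nat \<Rightarrow> complex) \<Rightarrow> nat" where
  "l0 d v = card {j \<in> {0..<d}. v j \<noteq> 0}"

definition cnorm :: "nat \<Rightarrow> (nat \<Rightarrow> complex) \<Rightarrow> real" where
  "cnorm d v = sqrt (\<Sum>j<d. (cmod (v j))\<^sup>2)"

definition cinner :: "nat \<Rightarrow> (nat \<Rightarrow> complex) \<Rightarrow> (nat \<Rightarrow> complex) \<Rightarrow> complex" where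
  "cinner d x y = (\<Sum>k<d. x k * cnj (y k))"

definition mat_vec :: "nat \<Rightarrow> (nat \<Rightarrow> nat \<Rightarrow> complex) \<Rightarrow> (nat \<Rightarrow> complex) \<Rightarrow> (nat \<Rightarrow> complex)" where
  "mat_vec d B v = (\<lambda>k. \<Sum>j<d. B k j * v j)"

text \<open>Pairwise (delta, sigma)-incoherence of B_0,...,B_{N-1}, with B_i an m x ns i matrix.
  The supremum bound is unfolded: every admissible value is at most delta.\<close>
definition pairwise_incoherent ::
  "nat \<Rightarrow> nat \<Rightarrow> (nat \<Rightarrow> nat) \<Rightarrow> (nat \<Rightarrow> nat \<Rightarrow> nat \<Rightarrow> complex) \<Rightarrow> real \<Rightarrow> (nat \<Rightarrow> nat) \<Rightarrow> bool" where
  "pairwise_incoherent N m ns B \<delta> \<sigma> \<longleftrightarrow>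
     (\<forall>i<N. \<forall>j<N. i \<noteq> j \<longrightarrow>
        (\<forall>vi \<in> vec_space (ns i). \<forall>vj \<in> vec_space (ns j).
           l0 (ns i) vi \<le> \<sigma> i \<longrightarrow> l0 (ns j) vj \<le> \<sigma> j \<longrightarrow>
           cnorm (ns i) vi = 1 \<longrightarrow> cnorm (ns j) vj = 1 \<longrightarrow>
           cmod (cinner m (mat_vec (ns i) (B i) vi) (mat_vec (ns j) (B j) vj)) \<le> \<delta>))"

definition dft :: "nat \<Rightarrow> nat \<Rightarrow> nat \<Rightarrow> complex" where
  "dft n j k = exp (- 2 * pi * \<i> * of_nat (j * k) / of_nat n) / complex_of_real (sqrt (real n))"

text \<open>Random outcome: omega (i,k) = (row index of F sampled for row k of B_i, sign (True = +1)).\<close>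
definition sample_space :: "nat \<Rightarrow> nat \<Rightarrow> nat \<Rightarrow> (nat \<times> nat \<Rightarrow> nat \<times> bool) pmf" where
  "sample_space n N m =
     Pi_pmf ({0..<N} \<times> {0..<m}) (0, True) (\<lambda>_. pmf_of_set ({0..<n} \<times> UNIV))"

definition subsampled_dft ::
  "nat \<Rightarrow> nat \<Rightarrow> (nat \<times> nat \<Rightarrow> nat \<times> bool) \<Rightarrow> nat \<Rightarrow> nat \<Rightarrow> nat \<Rightarrow> complex" where
  "subsampled_dft n m \<omega> i k j =
     (if snd (\<omega> (i, k)) then 1 else -1) / complex_of_real (sqrt (real m)) * dft n (fst (\<omega> (i, k))) j"

end

theory Submission
  imports Defs "HOL-Probability.Hoeffding"
begin


definition flp :: "nat \<times> bool \<Rightarrow> nat \<times> bool" where "flp u = (fst u, \<not> snd u)"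

lemma map_flp_U: "map_pmf flp (pmf_of_set ({0..<n} \<times> (UNIV::bool set))) = pmf_of_set ({0..<n} \<times> UNIV)" if "0 < n"
proof -
  have inj: "inj_on flp ({0..<n} \<times> UNIV)" by (auto simp: inj_on_def flp_def)
  have im: "flp ` ({0..<n} \<times> UNIV) = {0..<n} \<times> UNIV"
    by (auto simp: flp_def image_iff)
  show ?thesis using that by (subst map_pmf_of_set_inj[OF inj]) (auto simp: im)
qed

lemma flip_preserves:
  assumes x: "x \<in> {0..<N}\<times>{0..<m}" and n: "0<n"
  shows "map_pmf (\<lambda>w. w(x := flp (w x))) (sample_space n N m) = sample_space n N m"
proof -
  define A where "A = {0..<N}\<times>{0..<(m::nat)}"
  define U where "U = pmf_of_set ({0..<n} \<times> (UNIV::bool set))"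
  define R where "R = Pi_pmf (A - {x}) (0, True) (\<lambda>_. U)"
  have fin: "finite (A - {x})" by (simp add: A_def)
  have AA: "A = insert x (A - {x})" using x by (auto simp: A_def)
  have S: "sample_space n N m = map_pmf (\<lambda>(y,f). f(x:=y)) (pair_pmf U R)"
    unfolding sample_space_def A_def[symmetric] U_def[symmetric] R_def
    by (subst AA, subst Pi_pmf_insert[OF fin]) auto
  have "map_pmf (\<lambda>w. w(x := flp (w x))) (sample_space n N m)
        = map_pmf (\<lambda>(y,f). f(x:=y)) (map_pmf (apfst flp) (pair_pmf U R))"
    unfolding S map_pmf_comp by (intro map_pmf_cong) (auto simp: case_prod_unfold)
  also have "map_pmf (apfst flp) (pair_pmf U R) = pair_pmf (map_pmf flp U) R"
    by (simp add: pair_map_pmf1)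
  also have "map_pmf flp U = U" using n by (simp add: U_def map_flp_U)
  finally show ?thesis by (simp only: flip: S)
qed



lemma hoeff:
  fixes g :: "nat\<times>bool \<Rightarrow> nat\<times>bool \<Rightarrow> real"
  assumes i: "i<N" and j: "j<N" and ij: "i\<noteq>j" and n: "0<n" and m: "0<m" and c: "c>0"
    and bound: "\<And>u v. \<bar>g u v\<bar> \<le> c" and anti: "\<And>u v. g (flp u) v = - g u v" and eps: "\<epsilon> \<ge> 0"
  shows "measure_pmf.prob (sample_space n N m) {w. \<epsilon> \<le> \<bar>\<Sum>k<m. g (w (i,k)) (w (j,k))\<bar>}
           \<le> 2 * exp (-2*\<epsilon>\<^sup>2/(real m * (2*c)\<^sup>2))"
proof -
  define P where "P = sample_space n N m"
  define A where "A = {0..<N}\<times>{0..<(m::nat)}"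
  define X where "X = (\<lambda>k (w::nat\<times>nat\<Rightarrow>nat\<times>bool). g (w (i,k)) (w (j,k)))"
  define K where "K = (\<lambda>k::nat. {(i,k),(j,k)})"
  have ind0: "prob_space.indep_vars (measure_pmf P) (\<lambda>_. count_space UNIV) (\<lambda>x f. f x) A"
    unfolding P_def sample_space_def A_def by (rule indep_vars_Pi_pmf) simp
  have ind1: "prob_space.indep_vars (measure_pmf P) (\<lambda>k. PiM (K k) (\<lambda>_. count_space UNIV))
      (\<lambda>k w. restrict (\<lambda>x. w x) (K k)) {0..<m}"
    by (rule prob_space.indep_vars_restrict[OF measure_pmf.prob_space_axioms ind0]) (auto simp: K_def disjoint_family_on_def A_def i j)
  have meas: "(\<lambda>f. g (f (i,k)) (f (j,k))) \<in> measurable (PiM (K k) (\<lambda>_. count_space UNIV)) borel" for k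
  proof (rule measurable_compose_countable[where f="\<lambda>u f. g u (f (j,k))"])
    show "(\<lambda>f. f (i, k)) \<in> PiM (K k) (\<lambda>_. count_space UNIV) \<rightarrow>\<^sub>M count_space UNIV"
      by (rule measurable_component_singleton) (simp add: K_def)
    fix u
    show "(\<lambda>f. g u (f (j, k))) \<in> PiM (K k) (\<lambda>_. count_space UNIV) \<rightarrow>\<^sub>M borel"
      by (rule measurable_compose[OF measurable_component_singleton[where i="(j,k)"]]) (auto simp: K_def)
  qed
  have ind2: "prob_space.indep_vars (measure_pmf P) (\<lambda>_. borel) X {0..<m}"
  proof -
    have "prob_space.indep_vars (measure_pmf P) (\<lambda>_. borel)
        (\<lambda>k w. (\<lambda>f. g (f (i,k)) (f (j,k))) (restrict (\<lambda>x. w x) (K k))) {0..<m}"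
      by (rule prob_space.indep_vars_compose2[OF measure_pmf.prob_space_axioms ind1 meas])
    then show ?thesis
      by (subst (asm) prob_space.indep_vars_cong[OF measure_pmf.prob_space_axioms, where Y=X and N'="\<lambda>_. borel"]) (auto simp: X_def K_def)
  qed
  have E: "measure_pmf.expectation P (X k) = 0" if k: "k<m" for k
  proof -
    define T where "T = (\<lambda>w::nat\<times>nat\<Rightarrow>nat\<times>bool. w((i,k) := flp (w (i,k))))"
    have "measure_pmf.expectation P (X k) = measure_pmf.expectation (map_pmf T P) (X k)"
      unfolding P_def T_def using flip_preserves[of "(i,k)" N m n] i k n by simp
    also have "\<dots> = measure_pmf.expectation P (\<lambda>w. - X k w)"
      using ij by (simp add: T_def X_def anti)
    also have "\<dots> = - measure_pmf.expectation P (X k)" by simp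
    finally show ?thesis by simp
  qed
  interpret H: Hoeffding_ineq "measure_pmf P" "{0..<m}" X "\<lambda>_. -c" "\<lambda>_. c"
     "(\<Sum>k\<in>{0..<m}. measure_pmf.expectation P (X k))"
  proof unfold_locales
    show "prob_space.indep_vars (measure_pmf P) (\<lambda>_. borel) X {0..<m}" by (rule ind2)
    fix k show "AE x in measure_pmf P. X k x \<in> {- c..c}"
      using bound by (intro AE_pmfI) (simp add: X_def abs_le_iff, smt (verit) bound)
  qed auto
  have mu: "(\<Sum>k\<in>{0..<m}. measure_pmf.expectation P (X k)) = 0" using E by simp
  have pos: "(\<Sum>k\<in>{0..<m}. (c - - c)\<^sup>2) > 0" using m c by simp
  have "measure_pmf.prob P {x\<in>space (measure_pmf P). \<epsilon> \<le> \<bar>(\<Sum>k\<in>{0..<m}. X k x) - 0\<bar>}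
        \<le> 2 * exp (-2 * \<epsilon>\<^sup>2 / (\<Sum>k\<in>{0..<m}. (c - - c)\<^sup>2))"
    using H.Hoeffding_ineq_abs_ge[OF eps pos] unfolding mu .
  moreover have "(\<Sum>k\<in>{0..<m}. (c - - c)\<^sup>2) = real m * (2*c)\<^sup>2" by simp
  moreover have "{x\<in>space (measure_pmf P). \<epsilon> \<le> \<bar>(\<Sum>k\<in>{0..<m}. X k x) - 0\<bar>}
      = {w. \<epsilon> \<le> \<bar>\<Sum>k<m. g (w (i,k)) (w (j,k))\<bar>}"
    by (auto simp: X_def atLeast0LessThan)
  ultimately show ?thesis by (simp add: P_def)
qed



lemma cmod_dft: "cmod (dft n r a) = 1 / sqrt (real n)"
proof -
  have "cmod (exp (- 2 * pi * \<i> * of_nat (r * a) / of_nat n)) = 1"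
    by (simp add: norm_exp_eq_Re)
  then show ?thesis by (simp add: dft_def norm_divide)
qed

definition sgnc :: "nat \<times> bool \<Rightarrow> complex" where "sgnc u = (if snd u then 1 else -1)"

definition gc :: "nat \<Rightarrow> nat \<Rightarrow> nat \<Rightarrow> nat \<Rightarrow> nat\<times>bool \<Rightarrow> nat\<times>bool \<Rightarrow> complex" where
  "gc n m a b u v = sgnc u / complex_of_real (sqrt (real m)) * dft n (fst u) a *
      cnj (sgnc v / complex_of_real (sqrt (real m)) * dft n (fst v) b)"

lemma gc_term: "subsampled_dft n m w i k a * cnj (subsampled_dft n m w j k b) = gc n m a b (w (i,k)) (w (j,k))"
  by (simp add: subsampled_dft_def gc_def sgnc_def)

lemma cmod_gc: "cmod (gc n m a b u v) = 1 / (real m * real n)"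
  by (simp add: gc_def norm_mult norm_divide cmod_dft sgnc_def real_sqrt_mult[symmetric])

lemma gc_flp: "gc n m a b (flp u) v = - gc n m a b u v"
  by (simp add: gc_def flp_def sgnc_def)

lemma entry_bound:
  assumes i: "i<N" and j: "j<N" and ij: "i\<noteq>j" and n: "0<n" and m: "0<m" and t: "t \<ge> 0"
  shows "measure_pmf.prob (sample_space n N m)
     {w. t < cmod (\<Sum>k<m. subsampled_dft n m w i k a * cnj (subsampled_dft n m w j k b))}
     \<le> 4 * exp (- (t\<^sup>2 * real m * (real n)\<^sup>2 / 8))"
proof -
  define P where "P = sample_space n N m"
  define c where "c = 1 / (real m * real n)"
  have c: "c > 0" using n m by (simp add: c_def)
  have bR: "\<bar>Re (gc n m a b u v)\<bar> \<le> c" for u v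
    using abs_Re_le_cmod[of "gc n m a b u v"] by (simp add: cmod_gc c_def)
  have bI: "\<bar>Im (gc n m a b u v)\<bar> \<le> c" for u v
    using abs_Im_le_cmod[of "gc n m a b u v"] by (simp add: cmod_gc c_def)
  have ex: "-2*(t/2)\<^sup>2/(real m * (2*c)\<^sup>2) = - (t\<^sup>2 * real m * (real n)\<^sup>2 / 8)"
    using n m by (simp add: c_def field_simps power2_eq_square)
  have hR: "measure_pmf.prob P {w. t/2 \<le> \<bar>\<Sum>k<m. Re (gc n m a b (w (i,k)) (w (j,k)))\<bar>}
      \<le> 2 * exp (- (t\<^sup>2 * real m * (real n)\<^sup>2 / 8))"
    unfolding P_def ex[symmetric]
    by (rule hoeff[OF i j ij n m c]) (use bR t in \<open>auto simp: gc_flp\<close>)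
  have hI: "measure_pmf.prob P {w. t/2 \<le> \<bar>\<Sum>k<m. Im (gc n m a b (w (i,k)) (w (j,k)))\<bar>}
      \<le> 2 * exp (- (t\<^sup>2 * real m * (real n)\<^sup>2 / 8))"
    unfolding P_def ex[symmetric]
    by (rule hoeff[OF i j ij n m c]) (use bI t in \<open>auto simp: gc_flp\<close>)
  have sub: "{w. t < cmod (\<Sum>k<m. subsampled_dft n m w i k a * cnj (subsampled_dft n m w j k b))}
     \<subseteq> {w. t/2 \<le> \<bar>\<Sum>k<m. Re (gc n m a b (w (i,k)) (w (j,k)))\<bar>} \<union>
        {w. t/2 \<le> \<bar>\<Sum>k<m. Im (gc n m a b (w (i,k)) (w (j,k)))\<bar>}"
  proof
    fix w assume "w \<in> {w. t < cmod (\<Sum>k<m. subsampled_dft n m w i k a * cnj (subsampled_dft n m w j k b))}"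
    then have "t < cmod (\<Sum>k<m. gc n m a b (w (i,k)) (w (j,k)))" by (simp add: gc_term)
    then have "t < \<bar>Re (\<Sum>k<m. gc n m a b (w (i,k)) (w (j,k)))\<bar> + \<bar>Im (\<Sum>k<m. gc n m a b (w (i,k)) (w (j,k)))\<bar>"
      using cmod_le by (rule order.strict_trans2)
    then show "w \<in> {w. t/2 \<le> \<bar>\<Sum>k<m. Re (gc n m a b (w (i,k)) (w (j,k)))\<bar>} \<union>
        {w. t/2 \<le> \<bar>\<Sum>k<m. Im (gc n m a b (w (i,k)) (w (j,k)))\<bar>}"
      by (simp add: Re_sum Im_sum) linarith
  qed
  have "measure_pmf.prob P {w. t < cmod (\<Sum>k<m. subsampled_dft n m w i k a * cnj (subsampled_dft n m w j k b))}
    \<le> measure_pmf.prob P ({w. t/2 \<le> \<bar>\<Sum>k<m. Re (gc n m a b (w (i,k)) (w (j,k)))\<bar>} \<union>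
        {w. t/2 \<le> \<bar>\<Sum>k<m. Im (gc n m a b (w (i,k)) (w (j,k)))\<bar>})"
    by (rule measure_pmf.finite_measure_mono[OF sub]) simp
  also have "\<dots> \<le> measure_pmf.prob P {w. t/2 \<le> \<bar>\<Sum>k<m. Re (gc n m a b (w (i,k)) (w (j,k)))\<bar>} +
        measure_pmf.prob P {w. t/2 \<le> \<bar>\<Sum>k<m. Im (gc n m a b (w (i,k)) (w (j,k)))\<bar>}"
    by (rule measure_Un_le) simp_all
  also have "\<dots> \<le> 4 * exp (- (t\<^sup>2 * real m * (real n)\<^sup>2 / 8))" using hR hI by simp
  finally show ?thesis by (simp add: P_def)
qed



lemma l1_bound:
  assumes "l0 n v \<le> \<sigma>" and "cnorm n v = 1"
  shows "(\<Sum>a<n. cmod (v a)) \<le> sqrt (real (min \<sigma> n))"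
proof -
  define S where "S = {j \<in> {0..<n}. v j \<noteq> 0}"
  have cS: "card S \<le> min \<sigma> n"
  proof -
    have "card S \<le> card {0..<n}" by (rule card_mono) (auto simp: S_def)
    then show ?thesis using assms(1) by (simp add: l0_def S_def)
  qed
  have sq: "(\<Sum>j<n. (cmod (v j))\<^sup>2) = 1"
    using assms(2) unfolding cnorm_def by (metis real_sqrt_eq_1_iff)
  have e1: "(\<Sum>a<n. cmod (v a)) = (\<Sum>a\<in>S. cmod (v a))"
    by (rule sum.mono_neutral_right) (auto simp: S_def)
  have e2: "(\<Sum>a<n. (cmod (v a))\<^sup>2) = (\<Sum>a\<in>S. (cmod (v a))\<^sup>2)"
    by (rule sum.mono_neutral_right) (auto simp: S_def)
  have "(\<Sum>a\<in>S. 1 * cmod (v a))\<^sup>2 \<le> (\<Sum>a\<in>S. 1\<^sup>2) * (\<Sum>a\<in>S. (cmod (v a))\<^sup>2)"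
    by (rule Cauchy_Schwarz_ineq_sum)
  then have "(\<Sum>a<n. cmod (v a))\<^sup>2 \<le> real (card S)" using e1 e2 sq by simp
  also have "\<dots> \<le> real (min \<sigma> n)" using cS by linarith
  finally show ?thesis by (rule real_le_rsqrt)
qed

lemma expand_inner:
  "cinner m (mat_vec n B1 x) (mat_vec n B2 y) =
     (\<Sum>a<n. \<Sum>b<n. x a * cnj (y b) * (\<Sum>k<m. B1 k a * cnj (B2 k b)))"
proof -
  have "cinner m (mat_vec n B1 x) (mat_vec n B2 y) = (\<Sum>k<m. \<Sum>a<n. \<Sum>b<n. B1 k a * x a * cnj (B2 k b * y b))"
    apply (simp add: cinner_def mat_vec_def cnj_sum sum_distrib_left sum_distrib_right)
    apply (rule sum.cong[OF refl])
    by (rule sum.swap)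
  also have "\<dots> = (\<Sum>a<n. \<Sum>b<n. \<Sum>k<m. B1 k a * x a * cnj (B2 k b * y b))"
    by (subst sum.swap) (simp add: sum.swap[of _ "{..<m}"])
  also have "\<dots> = (\<Sum>a<n. \<Sum>b<n. x a * cnj (y b) * (\<Sum>k<m. B1 k a * cnj (B2 k b)))"
    by (simp add: sum_distrib_left mult_ac)
  finally show ?thesis .
qed

lemma determ:
  fixes B :: "nat \<Rightarrow> nat \<Rightarrow> nat \<Rightarrow> complex"
  assumes hG: "\<And>i j a b. i<N \<Longrightarrow> j<N \<Longrightarrow> i\<noteq>j \<Longrightarrow> a<n \<Longrightarrow> b<n \<Longrightarrow> cmod (\<Sum>k<m. B i k a * cnj (B j k b)) \<le> t"
   and t: "t * real (min \<sigma> n) \<le> \<delta>" "t \<ge> 0"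
  shows "pairwise_incoherent N m (\<lambda>_. n) B \<delta> (\<lambda>_. \<sigma>)"
  unfolding pairwise_incoherent_def
proof (intro allI impI ballI)
  fix i j vi vj assume i: "i<N" and j: "j<N" and ij: "i\<noteq>j"
    and li: "l0 n vi \<le> \<sigma>" and lj: "l0 n vj \<le> \<sigma>" and ni: "cnorm n vi = 1" and nj: "cnorm n vj = 1"
  have "cmod (cinner m (mat_vec n (B i) vi) (mat_vec n (B j) vj))
     \<le> (\<Sum>a<n. \<Sum>b<n. cmod (vi a * cnj (vj b) * (\<Sum>k<m. B i k a * cnj (B j k b))))"
    unfolding expand_inner by (rule order.trans[OF norm_sum sum_mono[OF norm_sum]])
  also have "\<dots> \<le> (\<Sum>a<n. \<Sum>b<n. cmod (vi a) * cmod (vj b) * t)"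
    by (intro sum_mono) (auto simp: norm_mult intro!: mult_left_mono hG i j ij)
  also have "\<dots> = t * ((\<Sum>a<n. cmod (vi a)) * (\<Sum>b<n. cmod (vj b)))"
    apply (simp add: sum_distrib_left sum_distrib_right mult_ac)
    by (rule sum.swap)
  also have "\<dots> \<le> t * (sqrt (real (min \<sigma> n)) * sqrt (real (min \<sigma> n)))"
    by (intro mult_left_mono mult_mono l1_bound li lj ni nj t) (auto intro: sum_nonneg)
  also have "\<dots> = t * real (min \<sigma> n)" by simp
  also have "\<dots> \<le> \<delta>" by (rule t)
  finally show "cmod (cinner m (mat_vec n (B i) vi) (mat_vec n (B j) vj)) \<le> \<delta>" .
qed



lemma ln2_half: "ln (2::real) > 1/2" by (smt (verit) ln_add1_gt)

lemma arith_final: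
  fixes l la :: real
  assumes l: "l \<ge> 1/2" and la: "la \<ge> 1/2"
  shows "2*la + 2*l + 2 + l^4 \<le> 500 * (l^4 * la)"
proof -
  have l3: "l^3 \<ge> 1/8" using power_mono[OF l, of 3] by (simp add: power_divide)
  have l4: "l^4 \<ge> 1/16" using power_mono[OF l, of 4] by (simp add: power_divide)
  have X: "l^4 * la \<ge> 1/32" using mult_mono[OF l4 la] by simp
  have a: "la \<le> 16 * (l^4 * la)" using mult_right_mono[OF l4, of la] la by simp
  have b: "l \<le> 16 * (l^4 * la)"
  proof -
    have "l * (1/8) * (1/2) \<le> l * l^3 * la"
      using l by (intro mult_mono mult_left_mono l3 la) auto
    then show ?thesis by (simp add: power_Suc[symmetric] algebra_simps)
  qed
  have c: "l^4 \<le> 2 * (l^4 * la)" using mult_left_mono[OF la, of "l^4"] by simp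
  show ?thesis using a b c X by linarith
qed



lemma main_case:
  assumes n: "n \<ge> 2" and N: "N \<ge> 2" and sg: "\<sigma> \<ge> 1" and d0: "0<\<delta>" and d1: "\<delta><1"
   and mC: "real m \<ge> 2000 * real \<sigma> * \<delta> powr (-2) * (ln (real n))^4 * ln (real N)"
  shows "measure_pmf.prob (sample_space n N m)
         {\<omega>. pairwise_incoherent N m (\<lambda>_. n) (subsampled_dft n m \<omega>) \<delta> (\<lambda>_. \<sigma>)}
       \<ge> 1 - real n powr (- ((ln (real n)) ^ 3))"
proof -
  define l where "l = ln (real n)"
  define la where "la = ln (real N)"
  define L where "L = l^4 * la"
  define s where "s = real (min \<sigma> n)"
  define t where "t = \<delta> / s"
  define P where "P = sample_space n N m"
  have s1: "s \<ge> 1" using sg n by (simp add: s_def)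
  have ss: "s \<le> real \<sigma>" "s \<le> real n" by (auto simp: s_def)
  have l: "l \<ge> 1/2"
  proof -
    have "ln 2 \<le> ln (real n)" using n by (subst ln_le_cancel_iff) auto
    then show ?thesis using ln2_half by (simp add: l_def)
  qed
  have la: "la \<ge> 1/2"
  proof -
    have "ln 2 \<le> ln (real N)" using N by (subst ln_le_cancel_iff) auto
    then show ?thesis using ln2_half by (simp add: la_def)
  qed
  have Lpos: "L > 0" using l la by (simp add: L_def)
  have dp: "\<delta> powr (-2) = 1 / \<delta>^2" using d0 by (simp add: powr_neg_numeral)
  have m1: "\<delta>^2 * real m \<ge> 2000 * real \<sigma> * L"
  proof -
    have "\<delta>^2 * real m \<ge> \<delta>^2 * (2000 * real \<sigma> * (1/\<delta>^2) * l^4 * la)"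
      using mC d0 by (intro mult_left_mono) (auto simp: dp l_def la_def)
    then show ?thesis using d0 by (simp add: L_def field_simps)
  qed
  have mpos: "m > 0"
  proof -
    have "2000 * real \<sigma> * L > 0" using sg Lpos by simp
    with m1 have "\<delta>^2 * real m > 0" by linarith
    then show ?thesis using d0 by (auto simp: zero_less_mult_iff)
  qed
  have tpos: "t > 0" using d0 s1 by (simp add: t_def)
  have E: "t\<^sup>2 * real m * (real n)\<^sup>2 \<ge> 2000 * L * real n"
  proof -
    have sq: "s^2 \<le> real \<sigma> * real n" using ss s1
      by (simp add: power2_eq_square mult_mono)
    have "t\<^sup>2 * real m * (real n)\<^sup>2 = (\<delta>^2 * real m) * (real n)\<^sup>2 / s^2"
      using s1 by (simp add: t_def power_divide)
    also have "\<dots> \<ge> (2000 * real \<sigma> * L) * (real n)\<^sup>2 / s^2"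
      using m1 s1 by (intro divide_right_mono mult_right_mono) auto
    also have "(2000 * real \<sigma> * L) * (real n)\<^sup>2 / s^2 \<ge> 2000 * L * real n"
    proof -
      have "2000 * L * real n * s^2 \<le> 2000 * L * real n * (real \<sigma> * real n)"
        using sq Lpos by (intro mult_left_mono) auto
      then show ?thesis using s1 by (simp add: field_simps power2_eq_square)
    qed
    finally show ?thesis .
  qed
  have expb: "exp (- (t\<^sup>2 * real m * (real n)\<^sup>2 / 8)) \<le> exp (- (500 * L))"
  proof -
    have "2000 * L * real n \<ge> 4000 * L" using n Lpos by simp
    then show ?thesis using E by simp
  qed
  define I where "I = {..<N}\<times>{..<N}\<times>{..<n}\<times>{..<n}"
  define Bad where "Bad = (\<lambda>(i,j,a,b). if i = j then {} else
      {w. t < cmod (\<Sum>k<m. subsampled_dft n m w i k a * cnj (subsampled_dft n m w j k b))})"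
  have good: "UNIV - (\<Union>x\<in>I. Bad x) \<subseteq>
      {\<omega>. pairwise_incoherent N m (\<lambda>_. n) (subsampled_dft n m \<omega>) \<delta> (\<lambda>_. \<sigma>)}"
  proof
    fix w assume w: "w \<in> UNIV - (\<Union>x\<in>I. Bad x)"
    have "pairwise_incoherent N m (\<lambda>_. n) (subsampled_dft n m w) \<delta> (\<lambda>_. \<sigma>)"
    proof (rule determ)
      fix i j a b assume "i<N" "j<N" "i\<noteq>j" "a<n" "b<n"
      then have "w \<notin> Bad (i,j,a,b)" using w by (auto simp: I_def)
      then show "cmod (\<Sum>k<m. subsampled_dft n m w i k a * cnj (subsampled_dft n m w j k b)) \<le> t"
        using \<open>i\<noteq>j\<close> by (auto simp: Bad_def)
    next
      show "t * real (min \<sigma> n) \<le> \<delta>" using s1 by (simp add: t_def s_def[symmetric])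
      show "t \<ge> 0" using tpos by simp
    qed
    then show "w \<in> {\<omega>. pairwise_incoherent N m (\<lambda>_. n) (subsampled_dft n m \<omega>) \<delta> (\<lambda>_. \<sigma>)}" by simp
  qed
  have bad1: "measure_pmf.prob P (Bad x) \<le> 4 * exp (- (500 * L))" if x: "x \<in> I" for x
  proof -
    obtain i j a b where xe: "x = (i,j,a,b)" by (cases x) auto
    show ?thesis
    proof (cases "i = j")
      case True then show ?thesis by (simp add: xe Bad_def)
    next
      case False
      have "measure_pmf.prob P (Bad x) \<le> 4 * exp (- (t\<^sup>2 * real m * (real n)\<^sup>2 / 8))"
        unfolding xe Bad_def P_def using False x xe n mpos tpos
        by (simp add: I_def) (rule entry_bound, auto)
      also have "\<dots> \<le> 4 * exp (- (500 * L))" using expb by simp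
      finally show ?thesis .
    qed
  qed
  have "measure_pmf.prob P (\<Union>x\<in>I. Bad x) \<le> (\<Sum>x\<in>I. measure_pmf.prob P (Bad x))"
    by (rule measure_pmf.finite_measure_subadditive_finite) (auto simp: I_def)
  also have "\<dots> \<le> (\<Sum>x\<in>I. 4 * exp (- (500 * L)))" by (rule sum_mono) (rule bad1)
  also have "\<dots> = real N ^ 2 * real n ^ 2 * 4 * exp (- (500 * L))"
    by (simp add: I_def card_cartesian_product power2_eq_square)
  also have "\<dots> \<le> exp (- (l^4))"
  proof -
    have eN: "real N ^ 2 = exp (2*la)"
    proof -
      have "exp la = real N" using N unfolding la_def by simp
      then show ?thesis using exp_of_nat_mult[of 2 la] by simp
    qed
    have en: "real n ^ 2 = exp (2*l)"
    proof -
      have "exp l = real n" using n unfolding l_def by simp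
      then show ?thesis using exp_of_nat_mult[of 2 l] by simp
    qed
    have e4: "(4::real) \<le> exp 2"
    proof -
      have "(4::real) = exp (2 * ln 2)" using exp_of_nat_mult[of 2 "ln (2::real)"] by simp
      also have "\<dots> \<le> exp 2" using ln_2_less_1 by simp
      finally show ?thesis .
    qed
    have "real N ^ 2 * real n ^ 2 * 4 * exp (- (500 * L)) \<le> exp (2*la) * exp (2*l) * exp 2 * exp (- (500 * L))"
      unfolding eN en by (intro mult_right_mono mult_left_mono e4) auto
    also have "\<dots> = exp (2*la + 2*l + 2 - 500 * L)" by (simp add: exp_add[symmetric])
    also have "\<dots> \<le> exp (- (l^4))"
      using arith_final[OF l la] by (simp add: L_def)
    finally show ?thesis .
  qed
  also have "exp (- (l^4)) = real n powr (- ((ln (real n)) ^ 3))"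
    using n by (simp add: l_def powr_def power3_eq_cube power4_eq_xxxx)
  finally have U: "measure_pmf.prob P (\<Union>x\<in>I. Bad x) \<le> real n powr (- ((ln (real n)) ^ 3))" .
  have "measure_pmf.prob P (UNIV - (\<Union>x\<in>I. Bad x)) = 1 - measure_pmf.prob P (\<Union>x\<in>I. Bad x)"
    using measure_pmf.prob_compl[of "\<Union>x\<in>I. Bad x" P] by simp
  moreover have "measure_pmf.prob P (UNIV - (\<Union>x\<in>I. Bad x)) \<le>
     measure_pmf.prob P {\<omega>. pairwise_incoherent N m (\<lambda>_. n) (subsampled_dft n m \<omega>) \<delta> (\<lambda>_. \<sigma>)}"
    by (rule measure_pmf.finite_measure_mono[OF good]) simp
  ultimately show ?thesis using U by (simp add: P_def)
qed



lemma G_le1: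
  assumes "n > 0"
  shows "cmod (\<Sum>k<m. subsampled_dft n m w i k a * cnj (subsampled_dft n m w j k b)) \<le> 1"
proof -
  have "cmod (\<Sum>k<m. subsampled_dft n m w i k a * cnj (subsampled_dft n m w j k b))
      \<le> (\<Sum>k<m. cmod (gc n m a b (w (i,k)) (w (j,k))))"
    unfolding gc_term by (rule norm_sum)
  also have "\<dots> = real m * (1 / (real m * real n))" by (simp add: cmod_gc)
  also have "\<dots> \<le> 1" using assms by (cases "m = 0") (auto simp: field_simps)
  finally show ?thesis .
qed

theorem proposition1:
  shows "\<exists>C::real. C > 0 \<and>
    (\<forall>(n::nat) (N::nat) (m::nat) (\<sigma>::nat) (\<delta>::real).
       0 < n \<longrightarrow> 0 < \<delta> \<longrightarrow> \<delta> < 1 \<longrightarrow>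
       real m \<ge> C * real \<sigma> * \<delta> powr (-2) * (ln (real n)) ^ 4 * ln (real N) \<longrightarrow>
       measure_pmf.prob (sample_space n N m)
         {\<omega>. pairwise_incoherent N m (\<lambda>_. n) (subsampled_dft n m \<omega>) \<delta> (\<lambda>_. \<sigma>)}
       \<ge> 1 - real n powr (- ((ln (real n)) ^ 3)))"
proof (intro exI[of _ 2000] conjI allI impI)
  fix n N m \<sigma> :: nat and \<delta> :: real
  assume n: "0 < n" and d0: "0 < \<delta>" and d1: "\<delta> < 1"
    and mC: "real m \<ge> 2000 * real \<sigma> * \<delta> powr (-2) * (ln (real n)) ^ 4 * ln (real N)"
  let ?E = "{\<omega>. pairwise_incoherent N m (\<lambda>_. n) (subsampled_dft n m \<omega>) \<delta> (\<lambda>_. \<sigma>)}"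
  let ?P = "sample_space n N m"
  have nn: "real n powr (- ((ln (real n)) ^ 3)) \<ge> 0" by simp
  show "measure_pmf.prob ?P ?E \<ge> 1 - real n powr (- ((ln (real n)) ^ 3))"
  proof (cases "n = 1 \<or> N < 2 \<or> \<sigma> = 0")
    case True
    then consider "n = 1" | "N < 2" | "\<sigma> = 0" by blast
    then show ?thesis
    proof cases
      case 1 then show ?thesis by simp
    next
      case 2
      then have "?E = UNIV" by (auto simp: pairwise_incoherent_def)
      then show ?thesis using nn by simp
    next
      case 3
      have "pairwise_incoherent N m (\<lambda>_. n) (subsampled_dft n m w) \<delta> (\<lambda>_. \<sigma>)" for w
          by (rule determ[where t=1]) (use G_le1[OF n] 3 d0 in auto)
      then have "?E = UNIV" by auto
      then show ?thesis using nn by simp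
    qed
  next
    case False
    then have "n \<ge> 2" "N \<ge> 2" "\<sigma> \<ge> 1" using n by auto
    then show ?thesis using main_case[OF _ _ _ d0 d1 mC] by simp
  qed
qed (simp)

end
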